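(* Let $p_1,\dots,p_r,q_1,\dots,q_s$ be positive integers with $\sum_ip_i=\sum_jq_j$, set $k=r+s$ and $(a_1,\dots,a_k)=(p_1,\dots,p_r,-q_1,\dots,-q_s)$, and $\epsilon=(-1)^{q_1+\cdots+q_s}$. Suppose $\{1,\dots,k\}$ is a disjoint union of nonempty subsets $K_1,\dots,K_l$ such that $\sum_{i\in K_j}a_i=0$ and $\gcd\{a_i:i\in K_j\}=1$ for each $j$. Let $q$ be a prime power, $\lambda\in\mathbb{F}_q^\times$, and let $\mathcal V_\lambda(\mathbb{F}_q^\times)$ be the set of points of $\mathbb{P}^{|K_1|-1}(\mathbb{F}_q)\times\cdots\times\mathbb{P}^{|K_l|-1}(\mathbb{F}_q)$ (the $j$-th factor having homogeneous coordinates $(x_i)_{i\in K_j}$) with all coordinates nonzero satisfying $\sum_{i\in K_j}x_i=0$ for $j=1,\dots,l$ and $\lambda x_1^{a_1}\cdots x_k^{a_k}=\epsilon$. Then $$|\mathcal V_\lambda(\mathbb{F}_q^\times)|=\frac{1}{q-1}\prod_{j=1}^lQ_{|K_j|}(q)+\frac{1}{q^l(q-1)}\sum_{m=1}^{q-2}g(a_1m)\cdots g(a_km)\,\omega(\epsilon\lambda)^m,$$ where $Q_n(x)=\big((x-1)^{n-1}+(-1)^n\big)/x$.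
   Context: Fix a nontrivial additive character $\psi_q$ of $\mathbb{F}_q$, a generator $\omega$ of the character group of $\mathbb{F}_q^\times$, and $g(m)=\sum_{x\in\mathbb{F}_q^\times}\omega(x)^m\psi_q(x)$ for $m\in\mathbb{Z}$. *)

theory Defs
  imports Complex_Main "HOL-Library.FuncSet"
begin

text \<open>Finite fields are modelled by a type of class {field, finite}; q = CARD('a).\<close>

definition add_char :: "('a::{field,finite} \<Rightarrow> complex) \<Rightarrow> bool" where
  "add_char \<psi> \<longleftrightarrow> (\<forall>x y. \<psi> (x + y) = \<psi> x * \<psi> y) \<and> (\<forall>x. \<psi> x \<noteq> 0)"

text \<open>A multiplicative character of F_q^x (values at 0 are irrelevant).\<close>
definition mult_char :: "('a::{field,finite} \<Rightarrow> complex) \<Rightarrow> bool" where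
  "mult_char \<chi> \<longleftrightarrow> (\<forall>x y. x \<noteq> 0 \<longrightarrow> y \<noteq> 0 \<longrightarrow> \<chi> (x * y) = \<chi> x * \<chi> y)
                    \<and> (\<forall>x. x \<noteq> 0 \<longrightarrow> \<chi> x \<noteq> 0)"

definition char_generator :: "('a::{field,finite} \<Rightarrow> complex) \<Rightarrow> bool" where
  "char_generator \<omega> \<longleftrightarrow> mult_char \<omega> \<and>
     (\<forall>\<chi>. mult_char \<chi> \<longrightarrow> (\<exists>n::nat. \<forall>x. x \<noteq> 0 \<longrightarrow> \<chi> x = \<omega> x ^ n))"

definition gauss :: "('a::{field,finite} \<Rightarrow> complex) \<Rightarrow> ('a \<Rightarrow> complex) \<Rightarrow> int \<Rightarrow> complex" where
  "gauss \<psi> \<omega> m = (\<Sum>x \<in> UNIV - {0}. (\<omega> x) powi m * \<psi> x)"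

definition Qpoly :: "nat \<Rightarrow> complex \<Rightarrow> complex" where
  "Qpoly n x = ((x - 1) ^ (n - 1) + (-1) ^ n) / x"

definition Vsol :: "nat \<Rightarrow> (nat \<Rightarrow> int) \<Rightarrow> nat \<Rightarrow> (nat \<Rightarrow> nat set) \<Rightarrow> 'a::{field,finite} \<Rightarrow> 'a
                    \<Rightarrow> (nat \<Rightarrow> 'a) set" where
  "Vsol k a l K lam eps = {x \<in> {1..k} \<rightarrow>\<^sub>E (UNIV - {0}).
      (\<forall>j\<in>{1..l}. (\<Sum>i\<in>K j. x i) = 0) \<and> lam * (\<Prod>i\<in>{1..k}. x i powi a i) = eps}"

text \<open>Two tuples define the same point of P^{|K_1|-1} x ... x P^{|K_l|-1}
  iff they differ by independent nonzero scalings on each block.\<close>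
definition proj_rel :: "nat \<Rightarrow> (nat \<Rightarrow> nat set) \<Rightarrow> ((nat \<Rightarrow> 'a::field) \<times> (nat \<Rightarrow> 'a)) set" where
  "proj_rel l K = {(x, y). \<exists>c::nat \<Rightarrow> 'a. (\<forall>j\<in>{1..l}. c j \<noteq> 0 \<and> (\<forall>i\<in>K j. y i = c j * x i))}"

definition Vproj :: "nat \<Rightarrow> (nat \<Rightarrow> int) \<Rightarrow> nat \<Rightarrow> (nat \<Rightarrow> nat set) \<Rightarrow> 'a::{field,finite} \<Rightarrow> 'a
                    \<Rightarrow> (nat \<Rightarrow> 'a) set set" where
  "Vproj k a l K lam eps = Vsol k a l K lam eps // (proj_rel l K \<inter> (Vsol k a l K lam eps \<times> Vsol k a l K lam eps))"

end

theory Submission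
  imports Defs "HOL-Algebra.Multiplicative_Group"
begin

definition ring_of_type_algebra :: "'a::field ring"
  where "ring_of_type_algebra = \<lparr> carrier = UNIV, monoid.mult = (\<lambda>x y. x * y), one = 1, ring.zero = 0, add = (\<lambda> x y. x + y) \<rparr>"

lemma field_from_type_algebra: "field (ring_of_type_algebra :: 'a::field ring)"
proof -
  have "\<exists>y. x + y = 0" for x :: 'a
    using add.right_inverse by blast
  moreover have "x \<noteq> 0 \<Longrightarrow> \<exists>y. x * y = 1" for x :: 'a
    by (rule exI[of _ "inverse x"]) auto
  ultimately show ?thesis
    unfolding ring_of_type_algebra_def using add.right_inverse
    by unfold_locales (auto simp:algebra_simps Units_def)
qed

lemma ring_of_type_pow:
  "(x::'a::field) [^]\<^bsub>ring_of_type_algebra\<^esub> (i::nat) = x ^ i"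
  by (induction i) (simp_all add: ring_of_type_algebra_def nat_pow_def mult.commute)

lemma ff_cyclic:
  "\<exists>g::'a::{field,finite}. g \<noteq> 0 \<and> (\<forall>x. x \<noteq> 0 \<longrightarrow> (\<exists>i::nat. x = g ^ i))"
proof -
  interpret R: field "ring_of_type_algebra :: 'a ring" by (rule field_from_type_algebra)
  have fin: "finite (carrier (ring_of_type_algebra :: 'a ring))" by simp
  from R.finite_field_mult_group_has_gen[OF fin] obtain a where
    a: "a \<in> carrier (mult_of (ring_of_type_algebra :: 'a ring))"
    and eq: "carrier (mult_of (ring_of_type_algebra :: 'a ring)) = {a[^]\<^bsub>ring_of_type_algebra\<^esub>i | i::nat . i \<in> UNIV}"
    by blast
  have c: "carrier (mult_of (ring_of_type_algebra :: 'a ring)) = UNIV - {0}"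
    by (simp add: ring_of_type_algebra_def)
  show ?thesis using a eq unfolding c ring_of_type_pow by blast
qed


lemma card_nonzero: "card (UNIV - {0::'a::{field,finite}}) = card (UNIV::'a set) - 1"
  by (simp add: card_Diff_singleton)

lemma card_ge2: "card (UNIV::'a::{field,finite} set) \<ge> 2"
proof -
  have "card {0::'a, 1} \<le> card (UNIV::'a set)" by (rule card_mono) auto
  thus ?thesis by simp
qed

lemma fermat_ff:
  assumes "(x::'a::{field,finite}) \<noteq> 0"
  shows "x ^ (card (UNIV::'a set) - 1) = 1"
proof -
  let ?U = "UNIV - {0::'a}"
  have bij: "bij_betw ((*) x) ?U ?U"
    using assms by (intro bij_betwI[where g="(*) (inverse x)"]) (auto simp: field_simps)
  have "(\<Prod>y\<in>?U. x * y) = (\<Prod>y\<in>?U. y)"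
    using prod.reindex_bij_betw[OF bij, of "\<lambda>y. y"] by simp
  moreover have "(\<Prod>y\<in>?U. x * y) = x ^ card ?U * (\<Prod>y\<in>?U. y)"
    by (simp add: prod.distrib)
  moreover have "(\<Prod>y\<in>?U. y) \<noteq> 0" by simp
  ultimately show ?thesis by (simp add: card_nonzero)
qed

lemma ff_gen:
  "\<exists>g::'a::{field,finite}. g \<noteq> 0 \<and> (\<lambda>i. g^i) ` {..<card (UNIV::'a set) - 1} = UNIV - {0}
     \<and> inj_on (\<lambda>i. g^i) {..<card (UNIV::'a set) - 1}"
proof -
  obtain g :: 'a where g: "g \<noteq> 0" "\<And>x. x \<noteq> 0 \<Longrightarrow> \<exists>i::nat. x = g ^ i"
    using ff_cyclic by blast
  let ?n = "card (UNIV::'a set) - 1"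
  have n: "?n > 0" using card_ge2[where 'a='a] by simp
  have gn: "g ^ ?n = 1" using fermat_ff g(1) by blast
  have img: "(\<lambda>i. g^i) ` {..<?n} = UNIV - {0}"
  proof
    show "(\<lambda>i. g^i) ` {..<?n} \<subseteq> UNIV - {0}" using g(1) by auto
    show "UNIV - {0} \<subseteq> (\<lambda>i. g^i) ` {..<?n}"
    proof
      fix x assume "x \<in> (UNIV - {0::'a})"
      then obtain i where i: "x = g ^ i" using g(2) by blast
      have "g ^ i = g ^ (?n * (i div ?n) + i mod ?n)" by (metis mult_div_mod_eq)
      also have "\<dots> = g ^ (i mod ?n)" by (simp only: power_add power_mult gn power_one mult_1)
      finally show "x \<in> (\<lambda>i. g^i) ` {..<?n}" using i n by auto
    qed
  qed
  have "inj_on (\<lambda>i. g^i) {..<?n}"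
    apply (rule eq_card_imp_inj_on) apply simp apply (subst img) apply (simp add: card_nonzero) done
  thus ?thesis using img g(1) by blast
qed

lemma cis_pow_eq_1:
  assumes "n > 0"
  shows "cis (2 * pi / real n) ^ d = 1 \<longleftrightarrow> n dvd d"
proof
  assume h: "cis (2 * pi / real n) ^ d = 1"
  hence "Re (cis (real d * (2 * pi / real n))) = 1"
    by (simp add: DeMoivre)
  hence "cos (real d * (2 * pi / real n)) = 1" by simp
  then obtain N :: int where N: "real d * (2 * pi / real n) = real_of_int N * 2 * pi"
    unfolding cos_one_2pi_int by blast
  hence "real d = real_of_int N * real n" using assms by (simp add: field_simps)
  hence "int d = N * int n" by (metis of_int_eq_iff of_int_mult of_int_of_nat_eq)
  hence "int n dvd int d" by simp
  thus "n dvd d" by simp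
next
  assume "n dvd d"
  then obtain c where "d = n * c" by blast
  hence "cis (2 * pi / real n) ^ d = cis (2 * pi * real c)"
    using assms by (simp add: DeMoivre field_simps)
  thus "cis (2 * pi / real n) ^ d = 1" by simp
qed



lemma mc_one: "mult_char \<omega> \<Longrightarrow> \<omega> 1 = 1"
  unfolding mult_char_def by (metis mult_1 mult_cancel_right1 one_neq_zero)

lemma mc_mult: "mult_char \<omega> \<Longrightarrow> x \<noteq> 0 \<Longrightarrow> y \<noteq> 0 \<Longrightarrow> \<omega> (x * y) = \<omega> x * \<omega> y"
  unfolding mult_char_def by blast

lemma mc_nz: "mult_char \<omega> \<Longrightarrow> x \<noteq> 0 \<Longrightarrow> \<omega> x \<noteq> 0"
  unfolding mult_char_def by blast

lemma mc_pow: "mult_char \<omega> \<Longrightarrow> x \<noteq> 0 \<Longrightarrow> \<omega> (x ^ k) = \<omega> x ^ k"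
  by (induction k) (simp_all add: mc_one mc_mult)

lemma mc_inv: assumes "mult_char \<omega>" "x \<noteq> 0" shows "\<omega> (inverse x) = inverse (\<omega> x)"
proof -
  have "\<omega> (inverse x) * \<omega> x = 1"
    using mc_mult[OF assms(1), of "inverse x" x] assms by (simp add: mc_one)
  thus ?thesis by (metis inverse_unique mult.commute)
qed

lemma mc_powi: assumes "mult_char \<omega>" "x \<noteq> 0" shows "\<omega> (x powi b) = \<omega> x powi b"
  using assms by (auto simp: power_int_def mc_pow mc_inv power_inverse)

lemma mc_prod: assumes "mult_char \<omega>" "\<forall>i\<in>A. f i \<noteq> 0"
  shows "\<omega> (\<Prod>i\<in>A. f i) = (\<Prod>i\<in>A. \<omega> (f i))"
  using assms(2)
proof (induction A rule: infinite_finite_induct)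
  case (infinite A) then show ?case by (simp add: mc_one[OF assms(1)])
next
  case empty then show ?case by (simp add: mc_one[OF assms(1)])
next
  case (insert x F) then show ?case by (simp add: mc_mult[OF assms(1)])
qed

lemma pow_mod_eq: "(z::'b::monoid_mult) ^ n = 1 \<Longrightarrow> z ^ a = z ^ (a mod n)"
proof -
  assume h: "z ^ n = 1"
  have "z ^ a = z ^ (n * (a div n) + a mod n)" by (metis mult_div_mod_eq)
  also have "\<dots> = z ^ (a mod n)" by (simp only: power_add power_mult h power_one mult_1)
  finally show ?thesis .
qed

lemma gen_order:
  assumes "char_generator (\<omega>::'a::{field,finite} \<Rightarrow> complex)"
  shows "\<exists>g::'a. g \<noteq> 0 \<and> (\<lambda>i. g^i) ` {..<card (UNIV::'a set) - 1} = UNIV - {0}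
     \<and> inj_on (\<lambda>i. g^i) {..<card (UNIV::'a set) - 1}
     \<and> (\<forall>d. \<omega> g ^ d = 1 \<longleftrightarrow> (card (UNIV::'a set) - 1) dvd d)"
proof -
  let ?n = "card (UNIV::'a set) - 1"
  have n: "?n > 0" using card_ge2[where 'a='a] by simp
  have mc: "mult_char \<omega>" using assms unfolding char_generator_def by blast
  obtain g :: 'a where g0: "g \<noteq> 0" and img: "(\<lambda>i. g^i) ` {..<?n} = UNIV - {0}"
    and inj: "inj_on (\<lambda>i. g^i) {..<?n}" using ff_gen by blast
  define dl where "dl x = inv_into {..<?n} (\<lambda>i. g^i) x" for x
  have dl1: "dl x < ?n \<and> g ^ dl x = x" if "x \<noteq> 0" for x
  proof -
    have "x \<in> (\<lambda>i. g^i) ` {..<?n}" using img that by auto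
    thus ?thesis unfolding dl_def by (metis f_inv_into_f inv_into_into lessThan_iff)
  qed
  have dl2: "dl (g ^ i) = i" if "i < ?n" for i
    unfolding dl_def using inj that by (simp add: inv_into_f_f)
  have gn: "g ^ ?n = 1" using fermat_ff g0 by blast
  define \<zeta> where "\<zeta> = cis (2 * pi / real ?n)"
  have zn: "\<zeta> ^ ?n = 1" unfolding \<zeta>_def using cis_pow_eq_1[OF n] by simp
  define \<chi> where "\<chi> x = \<zeta> ^ dl x" for x
  have "mult_char \<chi>"
    unfolding mult_char_def
  proof (intro conjI allI impI)
    fix x y :: 'a assume x: "x \<noteq> 0" and y: "y \<noteq> 0"
    have "x * y = g ^ (dl x + dl y)" using dl1[OF x] dl1[OF y] by (simp add: power_add)
    also have "\<dots> = g ^ ((dl x + dl y) mod ?n)" by (rule pow_mod_eq[OF gn])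
    finally have "dl (x * y) = (dl x + dl y) mod ?n" using dl2 n by simp
    hence "\<chi> (x * y) = \<zeta> ^ ((dl x + dl y) mod ?n)" unfolding \<chi>_def by simp
    also have "\<dots> = \<zeta> ^ (dl x + dl y)" using pow_mod_eq[OF zn] by simp
    finally show "\<chi> (x * y) = \<chi> x * \<chi> y" unfolding \<chi>_def by (simp add: power_add)
  next
    fix x :: 'a show "\<chi> x \<noteq> 0" unfolding \<chi>_def \<zeta>_def by simp
  qed
  then obtain N :: nat where N: "\<And>x. x \<noteq> 0 \<Longrightarrow> \<chi> x = \<omega> x ^ N"
    using assms unfolding char_generator_def by blast
  have "\<omega> g ^ d = 1 \<longleftrightarrow> ?n dvd d" for d
  proof
    assume h: "\<omega> g ^ d = 1"
    show "?n dvd d"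
    proof (cases "?n = 1")
      case True then show ?thesis by simp
    next
      case False
      hence "dl g = 1" using dl2[of 1] n by simp
      hence "\<chi> g = \<zeta>" unfolding \<chi>_def by simp
      hence "\<omega> g ^ N = \<zeta>" using N[OF g0] by simp
      hence "\<zeta> ^ d = (\<omega> g ^ d) ^ N" by (metis power_mult mult.commute)
      hence "\<zeta> ^ d = 1" using h by simp
      thus ?thesis using cis_pow_eq_1[OF n] unfolding \<zeta>_def by blast
    qed
  next
    assume "?n dvd d"
    then obtain c where c: "d = ?n * c" by blast
    have "\<omega> g ^ ?n = 1" using mc_pow[OF mc g0, of ?n] gn mc_one[OF mc] by simp
    thus "\<omega> g ^ d = 1" unfolding c by (simp add: power_mult)
  qed
  thus ?thesis using g0 img inj by blast
qed



lemma orth_m: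
  assumes "char_generator (\<omega>::'a::{field,finite} \<Rightarrow> complex)" "y \<noteq> 0"
  shows "(\<Sum>m<card (UNIV::'a set) - 1. \<omega> y ^ m) = (if y = 1 then of_nat (card (UNIV::'a set) - 1) else 0)"
proof -
  let ?n = "card (UNIV::'a set) - 1"
  have mc: "mult_char \<omega>" using assms unfolding char_generator_def by blast
  obtain g :: 'a where g0: "g \<noteq> 0" and img: "(\<lambda>i. g^i) ` {..<?n} = UNIV - {0}"
    and ord: "\<And>d. \<omega> g ^ d = 1 \<longleftrightarrow> ?n dvd d" using gen_order[OF assms(1)] by blast
  obtain e where e: "e < ?n" "y = g ^ e" using img assms(2) by (metis DiffI UNIV_I empty_iff imageE insert_iff lessThan_iff)
  show ?thesis
  proof (cases "y = 1")
    case True then show ?thesis by (simp add: mc_one[OF mc])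
  next
    case False
    hence "e \<noteq> 0" using e by (metis power_0)
    hence nd: "\<not> ?n dvd e" using e(1) by (auto dest: dvd_imp_le)
    have wy: "\<omega> y = \<omega> g ^ e" using e mc_pow[OF mc g0] by simp
    have "\<omega> y \<noteq> 1" using ord nd wy by simp
    moreover have "\<omega> y ^ ?n = 1" unfolding wy
      by (metis ord dvd_refl power_mult mult.commute power_one)
    ultimately show ?thesis using False by (simp add: sum_gp_strict)
  qed
qed

lemma orth_y:
  assumes "char_generator (\<omega>::'a::{field,finite} \<Rightarrow> complex)"
    and "\<not> int (card (UNIV::'a set) - 1) dvd b"
  shows "(\<Sum>y\<in>UNIV - {0::'a}. \<omega> y powi b) = 0"
proof -
  let ?n = "card (UNIV::'a set) - 1"
  let ?U = "UNIV - {0::'a}"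
  have mc: "mult_char \<omega>" using assms unfolding char_generator_def by blast
  obtain g :: 'a where g0: "g \<noteq> 0"
    and ord: "\<And>d. \<omega> g ^ d = 1 \<longleftrightarrow> ?n dvd d" using gen_order[OF assms(1)] by blast
  have n: "?n > 0" using card_ge2[where 'a='a] by simp
  define w where "w = \<omega> g"
  have w0: "w \<noteq> 0" unfolding w_def using mc_nz[OF mc g0] .
  have wn: "w ^ ?n = 1" unfolding w_def using ord by simp
  have wb: "w powi b \<noteq> 1"
  proof
    assume h: "w powi b = 1"
    have "w powi b = w powi (int ?n * (b div int ?n)) * w powi (b mod int ?n)"
      by (subst power_int_add[symmetric]) (simp_all add: w0)
    also have "\<dots> = (w powi int ?n) powi (b div int ?n) * w powi (b mod int ?n)"
      by (simp only: power_int_mult)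
    also have "\<dots> = w powi (b mod int ?n)"
      by (simp only: power_int_of_nat wn power_int_1_left mult_1_left)
    also have "\<dots> = w ^ nat (b mod int ?n)"
      using n by (intro power_int_nonneg_exp) simp
    finally have "?n dvd nat (b mod int ?n)" using h ord unfolding w_def by simp
    moreover have "nat (b mod int ?n) < ?n" using n by (simp add: nat_less_iff)
    ultimately have "nat (b mod int ?n) = 0" by (metis dvd_imp_le not_less neq0_conv)
    hence "b mod int ?n = 0" using n by (simp add: nat_eq_iff)
    thus False using assms(2) by (simp add: dvd_eq_mod_eq_0)
  qed
  have bij: "bij_betw ((*) g) ?U ?U"
    using g0 by (intro bij_betwI[where g="(*) (inverse g)"]) (auto simp: field_simps)
  have "(\<Sum>y\<in>?U. \<omega> y powi b) = (\<Sum>y\<in>?U. \<omega> (g * y) powi b)"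
    using sum.reindex_bij_betw[OF bij, of "\<lambda>y. \<omega> y powi b"] by simp
  also have "\<dots> = (\<Sum>y\<in>?U. w powi b * \<omega> y powi b)"
    by (intro sum.cong) (auto simp: mc_mult[OF mc] g0 w_def power_int_mult_distrib)
  also have "\<dots> = w powi b * (\<Sum>y\<in>?U. \<omega> y powi b)" by (simp add: sum_distrib_left)
  finally show ?thesis using wb
    by (metis mult_cancel_right1 mult.commute)
qed

lemma ac0: "add_char \<psi> \<Longrightarrow> \<psi> 0 = 1"
  unfolding add_char_def by (metis add_0 mult_cancel_right1)

lemma ac_sum: "add_char \<psi> \<Longrightarrow> \<psi> (\<Sum>i\<in>A. f i) = (\<Prod>i\<in>A. \<psi> (f i))"
  by (induction A rule: infinite_finite_induct) (auto simp: ac0 add_char_def)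

lemma ac_orth:
  assumes "add_char (\<psi>::'a::{field,finite} \<Rightarrow> complex)" "\<exists>x. \<psi> x \<noteq> 1"
  shows "(\<Sum>x\<in>UNIV. \<psi> (t * x)) = (if t = 0 then of_nat (card (UNIV::'a set)) else 0)"
proof (cases "t = 0")
  case True then show ?thesis by (simp add: ac0[OF assms(1)])
next
  case False
  obtain x0 where x0: "\<psi> x0 \<noteq> 1" using assms(2) by blast
  have bij: "bij_betw ((*) t) UNIV UNIV"
    using False by (intro bij_betwI[where g="(*) (inverse t)"]) (auto simp: field_simps)
  have bij2: "bij_betw (\<lambda>x. x + x0) UNIV (UNIV::'a set)"
    by (intro bij_betwI[where g="\<lambda>x. x - x0"]) auto
  have s1: "(\<Sum>x\<in>UNIV. \<psi> (t * x)) = (\<Sum>x\<in>UNIV. \<psi> x)"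
    using sum.reindex_bij_betw[OF bij, of \<psi>] by simp
  have "(\<Sum>x\<in>UNIV. \<psi> x) = (\<Sum>x\<in>UNIV. \<psi> (x + x0))"
    using sum.reindex_bij_betw[OF bij2, of \<psi>] by simp
  also have "\<dots> = \<psi> x0 * (\<Sum>x\<in>UNIV. \<psi> x)"
    using assms(1) by (simp add: add_char_def sum_distrib_left mult.commute)
  finally have "(\<Sum>x\<in>UNIV. \<psi> x) = 0" using x0
    by (metis mult_cancel_right1 mult.commute)
  then show ?thesis using s1 False by simp
qed

lemma gauss0:
  assumes "add_char (\<psi>::'a::{field,finite} \<Rightarrow> complex)" "\<exists>x. \<psi> x \<noteq> 1"
  shows "gauss \<psi> \<omega> 0 = -1"
proof -
  have "(\<Sum>x\<in>UNIV. \<psi> x) = 0" using ac_orth[OF assms, of 1] by simp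
  moreover have "(\<Sum>x\<in>UNIV. \<psi> x) = \<psi> 0 + (\<Sum>x\<in>UNIV - {0}. \<psi> x)"
    by (simp add: sum.remove[of UNIV 0])
  ultimately have "1 + (\<Sum>x\<in>UNIV - {0}. \<psi> x) = 0" using ac0[OF assms(1)] by simp
  thus ?thesis unfolding gauss_def by (simp add: add_eq_0_iff)
qed



definition blk :: "nat \<Rightarrow> (nat \<Rightarrow> nat set) \<Rightarrow> nat \<Rightarrow> nat" where
  "blk l K i = (THE j. j \<in> {1..l} \<and> i \<in> K j)"

lemma power_int_sum:
  "(z::'b::field) \<noteq> 0 \<Longrightarrow> (\<Prod>i\<in>A. z powi f i) = z powi (\<Sum>i\<in>A. f i)"
  by (induction A rule: infinite_finite_induct) (auto simp: power_int_add)

locale cnt =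
  fixes \<psi> \<omega> :: "'a::{field,finite} \<Rightarrow> complex" and k l :: nat and a :: "nat \<Rightarrow> int"
    and K :: "nat \<Rightarrow> nat set" and lam eps :: 'a
  assumes psi: "add_char \<psi>" and nontriv: "\<exists>x. \<psi> x \<noteq> 1" and omg: "char_generator \<omega>"
    and Kne: "\<forall>j\<in>{1..l}. K j \<noteq> {}"
    and Kdisj: "\<forall>j\<in>{1..l}. \<forall>j'\<in>{1..l}. j \<noteq> j' \<longrightarrow> K j \<inter> K j' = {}"
    and Kun: "(\<Union>j\<in>{1..l}. K j) = {1..k}"
    and Ksum: "\<forall>j\<in>{1..l}. (\<Sum>i\<in>K j. a i) = 0"
    and Kgcd: "\<forall>j\<in>{1..l}. Gcd (a ` K j) = 1"
    and lam0: "lam \<noteq> 0" and eps2: "eps * eps = 1"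
begin

abbreviation "U \<equiv> UNIV - {0::'a}"

lemma mc: "mult_char \<omega>" using omg unfolding char_generator_def by blast

lemma n_pos: "(card (UNIV::'a set) - 1) > 0" using card_ge2[where 'a='a] by simp

lemma nc: "(of_nat (card (UNIV::'a set) - 1) :: complex) = (of_nat (card (UNIV::'a set)) :: complex) - 1"
  using card_ge2[where 'a='a] by (simp add: of_nat_diff)

lemma Kfin: "j \<in> {1..l} \<Longrightarrow> finite (K j)"
  using Kun by (metis UN_I finite_atLeastAtMost finite_subset subsetI)

lemma Ksub: "j \<in> {1..l} \<Longrightarrow> K j \<subseteq> {1..k}"
  using Kun by blast

lemma blk_eq: "j \<in> {1..l} \<Longrightarrow> i \<in> K j \<Longrightarrow> blk l K i = j"
  unfolding blk_def by (rule the_equality) (use Kdisj in blast)+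

lemma prod_blocks: "(\<Prod>i\<in>{1..k}. f i) = (\<Prod>j\<in>{1..l}. \<Prod>i\<in>K j. f i)"
proof -
  have "(\<Prod>i\<in>{1..k}. f i) = (\<Prod>i\<in>(\<Union>j\<in>{1..l}. K j). f i)" using Kun by simp
  also have "\<dots> = (\<Prod>j\<in>{1..l}. \<Prod>i\<in>K j. f i)"
    by (rule prod.UNION_disjoint) (use Kfin Kdisj in auto)
  finally show ?thesis .
qed

lemma prod_blocks_blk: "(\<Prod>i\<in>{1..k}. f (blk l K i) i) = (\<Prod>j\<in>{1..l}. \<Prod>i\<in>K j. f j i)"
  unfolding prod_blocks by (intro prod.cong refl) (simp add: blk_eq)

lemma ind_block:
  "(if (\<forall>j\<in>{1..l}. (\<Sum>i\<in>K j. x i) = 0) then 1 else 0 :: complex)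
   = (1 / (of_nat (card (UNIV::'a set)) :: complex)) ^ l * (\<Sum>t\<in>{1..l} \<rightarrow>\<^sub>E UNIV. \<Prod>i\<in>{1..k}. \<psi> (t (blk l K i) * x i))"
proof -
  have "(if (\<forall>j\<in>{1..l}. (\<Sum>i\<in>K j. x i) = 0) then 1 else 0 :: complex)
      = (\<Prod>j\<in>{1..l}. if (\<Sum>i\<in>K j. x i) = 0 then 1 else 0)"
    by (auto simp: prod_zero)
  also have "\<dots> = (\<Prod>j\<in>{1..l}. (1 / (of_nat (card (UNIV::'a set)) :: complex)) * (\<Sum>t\<in>UNIV. \<psi> (t * (\<Sum>i\<in>K j. x i))))"
  proof (intro prod.cong refl)
    fix j
    have "(\<Sum>t\<in>UNIV. \<psi> (t * (\<Sum>i\<in>K j. x i))) = (\<Sum>t\<in>UNIV. \<psi> ((\<Sum>i\<in>K j. x i) * t))"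
      by (simp add: mult.commute)
    also have "\<dots> = (if (\<Sum>i\<in>K j. x i) = 0 then (of_nat (card (UNIV::'a set)) :: complex) else 0)"
      by (rule ac_orth[OF psi nontriv])
    finally show "(if (\<Sum>i\<in>K j. x i) = 0 then 1 else 0) = (1 / (of_nat (card (UNIV::'a set)) :: complex)) * (\<Sum>t\<in>UNIV. \<psi> (t * (\<Sum>i\<in>K j. x i)))"
      by simp
  qed
  also have "\<dots> = (1 / (of_nat (card (UNIV::'a set)) :: complex)) ^ l * (\<Prod>j\<in>{1..l}. \<Sum>t\<in>UNIV. \<psi> (t * (\<Sum>i\<in>K j. x i)))"
    by (subst prod.distrib) simp
  also have "(\<Prod>j\<in>{1..l}. \<Sum>t\<in>UNIV. \<psi> (t * (\<Sum>i\<in>K j. x i)))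
      = (\<Sum>t\<in>{1..l} \<rightarrow>\<^sub>E UNIV. \<Prod>j\<in>{1..l}. \<psi> (t j * (\<Sum>i\<in>K j. x i)))"
    by (rule prod_sum_PiE) auto
  also have "\<dots> = (\<Sum>t\<in>{1..l} \<rightarrow>\<^sub>E UNIV. \<Prod>i\<in>{1..k}. \<psi> (t (blk l K i) * x i))"
  proof (intro sum.cong refl)
    fix t :: "nat \<Rightarrow> 'a"
    show "(\<Prod>j\<in>{1..l}. \<psi> (t j * (\<Sum>i\<in>K j. x i))) = (\<Prod>i\<in>{1..k}. \<psi> (t (blk l K i) * x i))"
      using prod_blocks_blk[of "\<lambda>j i. \<psi> (t j * x i)"] by (simp add: sum_distrib_left ac_sum[OF psi])
  qed
  finally show ?thesis .
qed

lemma ind_mult: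
  assumes x: "x \<in> {1..k} \<rightarrow>\<^sub>E U"
  shows "(if lam * (\<Prod>i\<in>{1..k}. x i powi a i) = eps then 1 else 0 :: complex)
   = (1 / of_nat (card (UNIV::'a set) - 1)) * (\<Sum>m<(card (UNIV::'a set) - 1). \<omega> (lam * eps) ^ m * (\<Prod>i\<in>{1..k}. \<omega> (x i) powi (a i * int m)))"
proof -
  define P where "P = (\<Prod>i\<in>{1..k}. x i powi a i)"
  have xi: "i \<in> {1..k} \<Longrightarrow> x i \<noteq> 0" for i using x by auto
  have P0: "P \<noteq> 0" unfolding P_def using xi by simp
  have e0: "eps \<noteq> 0" using eps2 by auto
  define y where "y = lam * eps * P"
  have y0: "y \<noteq> 0" unfolding y_def using P0 e0 lam0 by simp
  have y1: "y = 1 \<longleftrightarrow> lam * P = eps"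
  proof
    assume h: "y = 1"
    have "lam * P = (eps * eps) * (lam * P)" using eps2 by simp
    also have "\<dots> = eps * y" unfolding y_def by (simp add: algebra_simps)
    finally show "lam * P = eps" using h by simp
  next
    assume "lam * P = eps"
    thus "y = 1" unfolding y_def using eps2 by (metis mult.assoc mult.commute)
  qed
  have wy: "\<omega> y ^ m = \<omega> (lam * eps) ^ m * (\<Prod>i\<in>{1..k}. \<omega> (x i) powi (a i * int m))" for m
  proof -
    have "\<omega> y = \<omega> (lam * eps) * \<omega> P"
      unfolding y_def using P0 e0 lam0 by (simp add: mc_mult[OF mc])
    moreover have "\<omega> P = (\<Prod>i\<in>{1..k}. \<omega> (x i) powi a i)"
      unfolding P_def using xi by (simp add: mc_prod[OF mc] mc_powi[OF mc])
    ultimately show ?thesis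
      by (simp add: power_mult_distrib prod_power_distrib power_int_power')
  qed
  have "(\<Sum>m<(card (UNIV::'a set) - 1). \<omega> y ^ m) = (if y = 1 then of_nat (card (UNIV::'a set) - 1) else 0)"
    by (rule orth_m[OF omg y0])
  hence "(if lam * P = eps then 1 else 0 :: complex) = (1 / of_nat (card (UNIV::'a set) - 1)) * (\<Sum>m<(card (UNIV::'a set) - 1). \<omega> y ^ m)"
    using n_pos y1 by auto
  thus ?thesis unfolding wy P_def .
qed

definition G :: "nat \<Rightarrow> 'a \<Rightarrow> nat \<Rightarrow> complex" where
  "G m u i = (\<Sum>y\<in>U. \<omega> y powi (a i * int m) * \<psi> (u * y))"

lemma card_Vsol_expand:
  "of_nat (card (Vsol k a l K lam eps)) = (1 / (of_nat (card (UNIV::'a set) - 1) * (of_nat (card (UNIV::'a set)) :: complex) ^ l)) *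
     (\<Sum>m<(card (UNIV::'a set) - 1). \<omega> (lam * eps) ^ m * (\<Sum>t\<in>{1..l} \<rightarrow>\<^sub>E UNIV. \<Prod>i\<in>{1..k}. G m (t (blk l K i)) i))"
proof -
  let ?P = "{1..k} \<rightarrow>\<^sub>E U"
  let ?T = "{1..l} \<rightarrow>\<^sub>E (UNIV::'a set)"
  let ?c = "1 / (of_nat (card (UNIV::'a set) - 1) * (of_nat (card (UNIV::'a set)) :: complex) ^ l)"
  define F where "F m t i y = \<omega> y powi (a i * int m) * \<psi> (t (blk l K i) * y)" for m t i y
  have finP: "finite ?P" by (simp add: finite_PiE)
  have sub: "Vsol k a l K lam eps \<subseteq> ?P" unfolding Vsol_def by blast
  have "of_nat (card (Vsol k a l K lam eps)) = (\<Sum>x\<in>?P. if x \<in> Vsol k a l K lam eps then 1 else 0 :: complex)"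
  proof -
    have "(\<Sum>x\<in>?P. if x \<in> Vsol k a l K lam eps then 1 else 0 :: complex)
        = (\<Sum>x\<in>?P \<inter> Vsol k a l K lam eps. 1)"
      using sum.inter_restrict[OF finP, of "\<lambda>_. 1::complex" "Vsol k a l K lam eps"] by simp
    also have "?P \<inter> Vsol k a l K lam eps = Vsol k a l K lam eps" using sub by blast
    finally show ?thesis by simp
  qed
  also have "\<dots> = (\<Sum>x\<in>?P. ?c * (\<Sum>m<(card (UNIV::'a set) - 1). \<Sum>t\<in>?T. \<omega> (lam * eps) ^ m * (\<Prod>i\<in>{1..k}. F m t i (x i))))"
  proof (intro sum.cong refl)
    fix x assume x: "x \<in> ?P"
    have "(if x \<in> Vsol k a l K lam eps then 1 else 0 :: complex)
        = (if (\<forall>j\<in>{1..l}. (\<Sum>i\<in>K j. x i) = 0) then 1 else 0 :: complex) *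
          (if lam * (\<Prod>i\<in>{1..k}. x i powi a i) = eps then 1 else 0 :: complex)"
      using x unfolding Vsol_def by auto
    also have "\<dots> = ((1 / (of_nat (card (UNIV::'a set)) :: complex)) ^ l * (\<Sum>t\<in>?T. \<Prod>i\<in>{1..k}. \<psi> (t (blk l K i) * x i))) *
        ((1 / of_nat (card (UNIV::'a set) - 1)) * (\<Sum>m<(card (UNIV::'a set) - 1). \<omega> (lam * eps) ^ m * (\<Prod>i\<in>{1..k}. \<omega> (x i) powi (a i * int m))))"
      unfolding ind_block ind_mult[OF x] ..
    also have "\<dots> = ?c * (\<Sum>m<(card (UNIV::'a set) - 1). \<Sum>t\<in>?T. \<omega> (lam * eps) ^ m * (\<Prod>i\<in>{1..k}. F m t i (x i)))"
      unfolding F_def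
      by (simp add: sum_product prod.distrib power_divide field_simps sum_distrib_left sum_divide_distrib
           flip: sum.swap[of _ "{..<(card (UNIV::'a set) - 1)}"])
    finally show "(if x \<in> Vsol k a l K lam eps then 1 else 0 :: complex) =
        ?c * (\<Sum>m<(card (UNIV::'a set) - 1). \<Sum>t\<in>?T. \<omega> (lam * eps) ^ m * (\<Prod>i\<in>{1..k}. F m t i (x i)))" .
  qed
  also have "\<dots> = ?c * (\<Sum>x\<in>?P. \<Sum>m<(card (UNIV::'a set) - 1). \<Sum>t\<in>?T. \<omega> (lam * eps) ^ m * (\<Prod>i\<in>{1..k}. F m t i (x i)))"
    by (rule sum_distrib_left[symmetric])
  also have "\<dots> = ?c * (\<Sum>m<(card (UNIV::'a set) - 1). \<Sum>x\<in>?P. \<Sum>t\<in>?T. \<omega> (lam * eps) ^ m * (\<Prod>i\<in>{1..k}. F m t i (x i)))"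
    by (rule arg_cong[where f="\<lambda>z. ?c * z"], rule sum.swap)
  also have "\<dots> = ?c * (\<Sum>m<(card (UNIV::'a set) - 1). \<Sum>t\<in>?T. \<Sum>x\<in>?P. \<omega> (lam * eps) ^ m * (\<Prod>i\<in>{1..k}. F m t i (x i)))"
    by (rule arg_cong[where f="\<lambda>z. ?c * z"], rule sum.cong[OF refl], rule sum.swap)
  also have "\<dots> = ?c * (\<Sum>m<(card (UNIV::'a set) - 1). \<Sum>t\<in>?T. \<omega> (lam * eps) ^ m * (\<Sum>x\<in>?P. \<Prod>i\<in>{1..k}. F m t i (x i)))"
    by (simp only: sum_distrib_left)
  also have "\<dots> = ?c * (\<Sum>m<(card (UNIV::'a set) - 1). \<Sum>t\<in>?T. \<omega> (lam * eps) ^ m * (\<Prod>i\<in>{1..k}. G m (t (blk l K i)) i))"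
  proof -
    have "(\<Sum>x\<in>?P. \<Prod>i\<in>{1..k}. F m t i (x i)) = (\<Prod>i\<in>{1..k}. G m (t (blk l K i)) i)" for m t
      unfolding G_def F_def by (rule prod_sum_PiE[symmetric]) auto
    thus ?thesis by simp
  qed
  also have "\<dots> = ?c * (\<Sum>m<(card (UNIV::'a set) - 1). \<omega> (lam * eps) ^ m * (\<Sum>t\<in>?T. \<Prod>i\<in>{1..k}. G m (t (blk l K i)) i))"
    by (simp add: sum_distrib_left)
  finally show ?thesis .
qed

end


context cnt
begin

lemma sum_T_blocks:
  "(\<Sum>t\<in>{1..l} \<rightarrow>\<^sub>E UNIV. \<Prod>i\<in>{1..k}. G m (t (blk l K i)) i)
   = (\<Prod>j\<in>{1..l}. \<Sum>u\<in>UNIV. \<Prod>i\<in>K j. G m u i)"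
proof -
  have "(\<Prod>i\<in>{1..k}. G m (t (blk l K i)) i) = (\<Prod>j\<in>{1..l}. \<Prod>i\<in>K j. G m (t j) i)" for t
    using prod_blocks_blk[of "\<lambda>j i. G m (t j) i"] by simp
  hence "(\<Sum>t\<in>{1..l} \<rightarrow>\<^sub>E UNIV. \<Prod>i\<in>{1..k}. G m (t (blk l K i)) i)
     = (\<Sum>t\<in>{1..l} \<rightarrow>\<^sub>E UNIV. \<Prod>j\<in>{1..l}. \<Prod>i\<in>K j. G m (t j) i)" by simp
  also have "\<dots> = (\<Prod>j\<in>{1..l}. \<Sum>u\<in>UNIV. \<Prod>i\<in>K j. G m u i)"
    by (rule prod_sum_PiE[symmetric]) auto
  finally show ?thesis .
qed

lemma G_nz:
  assumes "u \<noteq> 0"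
  shows "G m u i = \<omega> u powi (- (a i * int m)) * gauss \<psi> \<omega> (a i * int m)"
proof -
  let ?b = "a i * int m"
  have bij: "bij_betw (\<lambda>z. inverse u * z) U U"
    using assms by (intro bij_betwI[where g="(*) u"]) (auto simp: field_simps)
  have "G m u i = (\<Sum>z\<in>U. \<omega> (inverse u * z) powi ?b * \<psi> (u * (inverse u * z)))"
    unfolding G_def using sum.reindex_bij_betw[OF bij, of "\<lambda>y. \<omega> y powi ?b * \<psi> (u * y)"] by simp
  also have "\<dots> = (\<Sum>z\<in>U. \<omega> u powi (- ?b) * (\<omega> z powi ?b * \<psi> z))"
  proof (intro sum.cong refl)
    fix z assume z: "z \<in> U"
    have "\<omega> (inverse u * z) = inverse (\<omega> u) * \<omega> z"
      using z assms by (simp add: mc_mult[OF mc] mc_inv[OF mc])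
    moreover have e: "u * (inverse u * z) = z" using assms by (metis mult.assoc mult_1 right_inverse)
    ultimately show "\<omega> (inverse u * z) powi ?b * \<psi> (u * (inverse u * z)) = \<omega> u powi (- ?b) * (\<omega> z powi ?b * \<psi> z)"
      unfolding e using assms by (simp add: power_int_mult_distrib power_int_inverse power_int_minus)
  qed
  also have "\<dots> = \<omega> u powi (- ?b) * gauss \<psi> \<omega> ?b"
    unfolding gauss_def by (simp add: sum_distrib_left)
  finally show ?thesis .
qed

lemma block_nz:
  assumes "j \<in> {1..l}" "u \<noteq> 0"
  shows "(\<Prod>i\<in>K j. G m u i) = (\<Prod>i\<in>K j. gauss \<psi> \<omega> (a i * int m))"
proof -
  have wu: "\<omega> u \<noteq> 0" using mc_nz[OF mc assms(2)] .
  have "(\<Prod>i\<in>K j. G m u i) = (\<Prod>i\<in>K j. \<omega> u powi (- (a i * int m))) * (\<Prod>i\<in>K j. gauss \<psi> \<omega> (a i * int m))"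
    by (simp add: G_nz[OF assms(2)] prod.distrib)
  also have "(\<Prod>i\<in>K j. \<omega> u powi (- (a i * int m))) = \<omega> u powi (\<Sum>i\<in>K j. - (a i * int m))"
    by (rule power_int_sum[OF wu])
  also have "(\<Sum>i\<in>K j. - (a i * int m)) = - ((\<Sum>i\<in>K j. a i) * int m)"
    by (simp add: sum_distrib_right sum_negf)
  also have "\<dots> = 0" using Ksum assms(1) by simp
  finally show ?thesis by simp
qed

lemma G_zero: "G m 0 i = (\<Sum>y\<in>U. \<omega> y powi (a i * int m))"
  unfolding G_def by (simp add: ac0[OF psi])

lemma gcd_arg:
  assumes j: "j \<in> {1..l}" and m: "0 < m" "m < (card (UNIV::'a set) - 1)"
  shows "\<exists>i\<in>K j. \<not> int (card (UNIV::'a set) - 1) dvd a i * int m"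
proof (rule ccontr)
  assume "\<not> ?thesis"
  hence all: "\<forall>i\<in>K j. int (card (UNIV::'a set) - 1) dvd a i * int m" by blast
  have "int (card (UNIV::'a set) - 1) dvd Gcd ((*) (int m) ` (a ` K j))"
    by (rule Gcd_greatest) (use all in \<open>auto simp: mult.commute\<close>)
  also have "Gcd ((*) (int m) ` (a ` K j)) = int m"
    using Kgcd j by (simp add: Gcd_mult)
  finally have "(card (UNIV::'a set) - 1) dvd m" by simp
  thus False using m by (auto dest: dvd_imp_le)
qed

lemma block_zero:
  assumes j: "j \<in> {1..l}" and m: "0 < m" "m < (card (UNIV::'a set) - 1)"
  shows "(\<Prod>i\<in>K j. G m 0 i) = 0"
proof -
  obtain i where i: "i \<in> K j" "\<not> int (card (UNIV::'a set) - 1) dvd a i * int m" using gcd_arg[OF assms] by blast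
  have "G m 0 i = 0" unfolding G_zero by (rule orth_y[OF omg i(2)])
  thus ?thesis using i(1) Kfin[OF j] by (metis prod_zero_iff)
qed

lemma block_sum:
  "(\<Sum>u\<in>UNIV. H u) = H 0 + (\<Sum>u\<in>U. H u)" for H :: "'a \<Rightarrow> complex"
  by (simp add: sum.remove[of UNIV 0])

lemma blockval_pos:
  assumes j: "j \<in> {1..l}" and m: "0 < m" "m < (card (UNIV::'a set) - 1)"
  shows "(\<Sum>u\<in>UNIV. \<Prod>i\<in>K j. G m u i) = of_nat (card (UNIV::'a set) - 1) * (\<Prod>i\<in>K j. gauss \<psi> \<omega> (a i * int m))"
  unfolding block_sum block_zero[OF assms]
  by (simp add: block_nz[OF j] card_nonzero)

lemma blockval_0:
  assumes j: "j \<in> {1..l}"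
  shows "(\<Sum>u\<in>UNIV. \<Prod>i\<in>K j. G 0 u i) = of_nat (card (UNIV::'a set) - 1) ^ card (K j) + of_nat (card (UNIV::'a set) - 1) * (-1) ^ card (K j)"
proof -
  have "G 0 0 i = of_nat (card (UNIV::'a set) - 1)" for i unfolding G_zero by (simp add: card_nonzero)
  moreover have "gauss \<psi> \<omega> 0 = -1" by (rule gauss0[OF psi nontriv])
  ultimately show ?thesis
    unfolding block_sum by (simp add: block_nz[OF j] card_nonzero)
qed

end


lemma alg:
  fixes N Q V P S :: complex
  assumes "N \<noteq> 0" "Q \<noteq> 0" "V = (1 / (N * Q ^ l)) * ((N * Q) ^ l * P + N ^ l * S)"
  shows "V = N ^ l * (1 / N * P + 1 / (Q ^ l * N) * S)"
  using assms by (simp add: field_simps power_mult_distrib)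

context cnt
begin

lemma block0_Q:
  assumes j: "j \<in> {1..l}"
  shows "of_nat (card (UNIV::'a set) - 1) ^ card (K j) + of_nat (card (UNIV::'a set) - 1) * (-1) ^ card (K j) = of_nat (card (UNIV::'a set) - 1) * (of_nat (card (UNIV::'a set)) :: complex) * Qpoly (card (K j)) (of_nat (card (UNIV::'a set)) :: complex)"
proof -
  have c: "card (K j) \<ge> 1" using Kne Kfin[OF j] j by (simp add: Suc_le_eq card_gt_0_iff)
  then obtain c' where c': "card (K j) = Suc c'" by (cases "card (K j)") auto
  have q0: "(of_nat (card (UNIV::'a set)) :: complex) \<noteq> 0" using card_ge2[where 'a='a] by simp
  show ?thesis unfolding Qpoly_def c' nc using q0 by (simp add: field_simps)
qed

lemma card_Vsol_formula:
  "of_nat (card (Vsol k a l K lam eps)) = of_nat (card (UNIV::'a set) - 1) ^ l *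
     (1 / ((of_nat (card (UNIV::'a set)) :: complex) - 1) * (\<Prod>j=1..l. Qpoly (card (K j)) (of_nat (card (UNIV::'a set)) :: complex))
      + 1 / ((of_nat (card (UNIV::'a set)) :: complex) ^ l * ((of_nat (card (UNIV::'a set)) :: complex) - 1)) *
        (\<Sum>m=1..card (UNIV::'a set) - 2. (\<Prod>i=1..k. gauss \<psi> \<omega> (a i * int m)) * \<omega> (eps * lam) ^ m))"
proof -
  let ?W = "\<omega> (lam * eps)"
  let ?B = "\<lambda>m. \<Prod>j\<in>{1..l}. \<Sum>u\<in>UNIV. \<Prod>i\<in>K j. G m u i"
  have q0: "(of_nat (card (UNIV::'a set)) :: complex) \<noteq> 0" using card_ge2[where 'a='a] by simp
  have n0: "(of_nat (card (UNIV::'a set) - 1) :: complex) \<noteq> 0" using n_pos by simp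
  have "of_nat (card (Vsol k a l K lam eps)) = (1 / (of_nat (card (UNIV::'a set) - 1) * (of_nat (card (UNIV::'a set)) :: complex) ^ l)) * (\<Sum>m<(card (UNIV::'a set) - 1). ?W ^ m * ?B m)"
    unfolding card_Vsol_expand sum_T_blocks ..
  also have "(\<Sum>m<(card (UNIV::'a set) - 1). ?W ^ m * ?B m) = ?B 0 + (\<Sum>m=1..card (UNIV::'a set) - 2. ?W ^ m * ?B m)"
  proof -
    have "(\<Sum>m<(card (UNIV::'a set) - 1). ?W ^ m * ?B m) = (\<Sum>m\<in>{0..<(card (UNIV::'a set) - 1)}. ?W ^ m * ?B m)" by (simp add: atLeast0LessThan)
    also have "\<dots> = ?W ^ 0 * ?B 0 + (\<Sum>m\<in>{Suc 0..<(card (UNIV::'a set) - 1)}. ?W ^ m * ?B m)"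
      by (rule sum.atLeast_Suc_lessThan) (rule n_pos)
    also have "{Suc 0..<(card (UNIV::'a set) - 1)} = {1..card (UNIV::'a set) - 2}" by auto
    finally show ?thesis by simp
  qed
  also have "?B 0 = (of_nat (card (UNIV::'a set) - 1) * (of_nat (card (UNIV::'a set)) :: complex)) ^ l * (\<Prod>j=1..l. Qpoly (card (K j)) (of_nat (card (UNIV::'a set)) :: complex))"
  proof -
    have "?B 0 = (\<Prod>j\<in>{1..l}. of_nat (card (UNIV::'a set) - 1) * (of_nat (card (UNIV::'a set)) :: complex) * Qpoly (card (K j)) (of_nat (card (UNIV::'a set)) :: complex))"
    proof (intro prod.cong refl)
      fix j assume "j \<in> {1..l}"
      thus "(\<Sum>u\<in>UNIV. \<Prod>i\<in>K j. G 0 u i) = of_nat (card (UNIV::'a set) - 1) * (of_nat (card (UNIV::'a set)) :: complex) * Qpoly (card (K j)) (of_nat (card (UNIV::'a set)) :: complex)"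
        using blockval_0 block0_Q by simp
    qed
    thus ?thesis by (simp add: prod.distrib)
  qed
  also have "(\<Sum>m=1..card (UNIV::'a set) - 2. ?W ^ m * ?B m)
      = of_nat (card (UNIV::'a set) - 1) ^ l * (\<Sum>m=1..card (UNIV::'a set) - 2. (\<Prod>i=1..k. gauss \<psi> \<omega> (a i * int m)) * \<omega> (eps * lam) ^ m)"
  proof -
    have "?W ^ m * ?B m = of_nat (card (UNIV::'a set) - 1) ^ l * ((\<Prod>i=1..k. gauss \<psi> \<omega> (a i * int m)) * \<omega> (eps * lam) ^ m)"
      if m: "m \<in> {1..card (UNIV::'a set) - 2}" for m
    proof -
      have m': "0 < m" "m < (card (UNIV::'a set) - 1)" using m by auto
      have "?B m = (\<Prod>j\<in>{1..l}. of_nat (card (UNIV::'a set) - 1) * (\<Prod>i\<in>K j. gauss \<psi> \<omega> (a i * int m)))"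
      proof (intro prod.cong refl)
        fix j assume "j \<in> {1..l}"
        thus "(\<Sum>u\<in>UNIV. \<Prod>i\<in>K j. G m u i) = of_nat (card (UNIV::'a set) - 1) * (\<Prod>i\<in>K j. gauss \<psi> \<omega> (a i * int m))"
          using blockval_pos m' by simp
      qed
      also have "\<dots> = of_nat (card (UNIV::'a set) - 1) ^ l * (\<Prod>i=1..k. gauss \<psi> \<omega> (a i * int m))"
        unfolding prod_blocks[of "\<lambda>i. gauss \<psi> \<omega> (a i * int m)"] by (simp add: prod.distrib)
      finally show ?thesis by (simp add: mult.commute mult.left_commute)
    qed
    thus ?thesis by (simp add: sum_distrib_left)
  qed
  finally have V: "of_nat (card (Vsol k a l K lam eps)) = (1 / (of_nat (card (UNIV::'a set) - 1) * (of_nat (card (UNIV::'a set)) :: complex) ^ l)) *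
     ((of_nat (card (UNIV::'a set) - 1) * (of_nat (card (UNIV::'a set)) :: complex)) ^ l * (\<Prod>j=1..l. Qpoly (card (K j)) (of_nat (card (UNIV::'a set)) :: complex)) + of_nat (card (UNIV::'a set) - 1) ^ l *
      (\<Sum>m=1..card (UNIV::'a set) - 2. (\<Prod>i=1..k. gauss \<psi> \<omega> (a i * int m)) * \<omega> (eps * lam) ^ m))" .
  show ?thesis unfolding nc[symmetric] by (rule alg[OF n0 q0 V])
qed

end


context cnt
begin

definition scale :: "(nat \<Rightarrow> 'a) \<Rightarrow> (nat \<Rightarrow> 'a) \<Rightarrow> (nat \<Rightarrow> 'a)" where
  "scale x c = (\<lambda>i. if i \<in> {1..k} then c (blk l K i) * x i else undefined)"

lemma blk_in: "i \<in> {1..k} \<Longrightarrow> blk l K i \<in> {1..l} \<and> i \<in> K (blk l K i)"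
proof -
  assume "i \<in> {1..k}"
  then obtain j where "j \<in> {1..l}" "i \<in> K j" using Kun by blast
  thus ?thesis using blk_eq by simp
qed

lemma scale_in:
  assumes x: "x \<in> Vsol k a l K lam eps" and c: "c \<in> {1..l} \<rightarrow>\<^sub>E U"
  shows "scale x c \<in> Vsol k a l K lam eps \<and> (x, scale x c) \<in> proj_rel l K"
proof -
  have xP: "x \<in> {1..k} \<rightarrow>\<^sub>E U" and xs: "\<forall>j\<in>{1..l}. (\<Sum>i\<in>K j. x i) = 0"
    and xm: "lam * (\<Prod>i\<in>{1..k}. x i powi a i) = eps" using x unfolding Vsol_def by auto
  have P: "scale x c \<in> {1..k} \<rightarrow>\<^sub>E U"
    using xP c blk_in unfolding scale_def by (auto simp: PiE_iff extensional_def)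
  have S: "\<forall>j\<in>{1..l}. (\<Sum>i\<in>K j. scale x c i) = 0"
  proof
    fix j assume j: "j \<in> {1..l}"
    have "(\<Sum>i\<in>K j. scale x c i) = (\<Sum>i\<in>K j. c j * x i)"
      using Ksub[OF j] blk_eq[OF j] unfolding scale_def by (intro sum.cong refl) auto
    also have "\<dots> = 0" using xs j by (simp add: sum_distrib_left[symmetric])
    finally show "(\<Sum>i\<in>K j. scale x c i) = 0" .
  qed
  have "(\<Prod>i\<in>{1..k}. scale x c i powi a i) = (\<Prod>i\<in>{1..k}. c (blk l K i) powi a i * x i powi a i)"
    unfolding scale_def by (intro prod.cong refl) (simp add: power_int_mult_distrib)
  also have "\<dots> = (\<Prod>i\<in>{1..k}. c (blk l K i) powi a i) * (\<Prod>i\<in>{1..k}. x i powi a i)"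
    by (rule prod.distrib)
  also have "(\<Prod>i\<in>{1..k}. c (blk l K i) powi a i) = (\<Prod>j\<in>{1..l}. \<Prod>i\<in>K j. c j powi a i)"
    by (rule prod_blocks_blk[of "\<lambda>j i. c j powi a i"])
  also have "\<dots> = 1"
  proof (rule prod.neutral, intro ballI)
    fix j assume j: "j \<in> {1..l}"
    have "c j \<noteq> 0" using c j by auto
    hence "(\<Prod>i\<in>K j. c j powi a i) = c j powi (\<Sum>i\<in>K j. a i)" by (rule power_int_sum)
    thus "(\<Prod>i\<in>K j. c j powi a i) = 1" using Ksum j by simp
  qed
  finally have M: "lam * (\<Prod>i\<in>{1..k}. scale x c i powi a i) = eps" using xm by simp
  have "\<exists>c'. \<forall>j\<in>{1..l}. c' j \<noteq> 0 \<and> (\<forall>i\<in>K j. scale x c i = c' j * x i)"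
  proof (rule exI[of _ c], rule ballI)
    fix j assume j: "j \<in> {1..l}"
    show "c j \<noteq> 0 \<and> (\<forall>i\<in>K j. scale x c i = c j * x i)"
      using c j Ksub[OF j] blk_eq[OF j] unfolding scale_def by auto
  qed
  hence R: "(x, scale x c) \<in> proj_rel l K" unfolding proj_rel_def by blast
  show ?thesis using P S M R unfolding Vsol_def by blast
qed

lemma class_eq:
  assumes x: "x \<in> Vsol k a l K lam eps"
  shows "(proj_rel l K \<inter> (Vsol k a l K lam eps \<times> Vsol k a l K lam eps)) `` {x}
       = scale x ` ({1..l} \<rightarrow>\<^sub>E U)"
proof
  show "scale x ` ({1..l} \<rightarrow>\<^sub>E U) \<subseteq> (proj_rel l K \<inter> (Vsol k a l K lam eps \<times> Vsol k a l K lam eps)) `` {x}"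
    using scale_in[OF x] x by blast
next
  show "(proj_rel l K \<inter> (Vsol k a l K lam eps \<times> Vsol k a l K lam eps)) `` {x} \<subseteq> scale x ` ({1..l} \<rightarrow>\<^sub>E U)"
  proof
    fix y assume "y \<in> (proj_rel l K \<inter> (Vsol k a l K lam eps \<times> Vsol k a l K lam eps)) `` {x}"
    hence y: "y \<in> Vsol k a l K lam eps" and "(x, y) \<in> proj_rel l K" by auto
    then obtain c where c: "\<forall>j\<in>{1..l}. c j \<noteq> 0 \<and> (\<forall>i\<in>K j. y i = c j * x i)"
      unfolding proj_rel_def by blast
    have yP: "y \<in> {1..k} \<rightarrow>\<^sub>E U" using y unfolding Vsol_def by blast
    have "y = scale x (restrict c {1..l})"
    proof
      fix i show "y i = scale x (restrict c {1..l}) i"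
      proof (cases "i \<in> {1..k}")
        case True
        then show ?thesis using blk_in[OF True] c unfolding scale_def by auto
      next
        case False
        then show ?thesis using yP unfolding scale_def by (auto simp: PiE_def extensional_def)
      qed
    qed
    moreover have "restrict c {1..l} \<in> {1..l} \<rightarrow>\<^sub>E U" using c by auto
    ultimately show "y \<in> scale x ` ({1..l} \<rightarrow>\<^sub>E U)" by blast
  qed
qed

lemma scale_inj:
  assumes x: "x \<in> Vsol k a l K lam eps"
  shows "inj_on (scale x) ({1..l} \<rightarrow>\<^sub>E U)"
proof (rule inj_onI)
  fix c d assume c: "c \<in> {1..l} \<rightarrow>\<^sub>E U" and d: "d \<in> {1..l} \<rightarrow>\<^sub>E U" and eq: "scale x c = scale x d"
  have xP: "x \<in> {1..k} \<rightarrow>\<^sub>E U" using x unfolding Vsol_def by blast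
  show "c = d"
  proof (rule PiE_ext[OF c d])
    fix j assume j: "j \<in> {1..l}"
    obtain i where i: "i \<in> K j" using Kne j by blast
    have ik: "i \<in> {1..k}" using Ksub[OF j] i by blast
    have "scale x c i = scale x d i" using eq by simp
    hence "c j * x i = d j * x i" using ik blk_eq[OF j i] unfolding scale_def by simp
    moreover have "x i \<noteq> 0" using xP ik by auto
    ultimately show "c j = d j" by simp
  qed
qed

lemma card_Vproj: "card (Vproj k a l K lam eps) * (card (UNIV::'a set) - 1) ^ l = card (Vsol k a l K lam eps)"
proof -
  let ?V = "Vsol k a l K lam eps"
  let ?R = "proj_rel l K \<inter> (?V \<times> ?V)"
  have eqv: "equiv ?V ?R"
  proof (rule equivI)
    show "?R \<subseteq> ?V \<times> ?V" by blast
    show "refl_on ?V ?R"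
      unfolding refl_on_def proj_rel_def by (auto intro!: exI[of _ "\<lambda>_. 1"])
    show "sym ?R"
    proof (rule symI)
      fix x y assume "(x, y) \<in> ?R"
      then obtain c where c: "\<forall>j\<in>{1..l}. c j \<noteq> 0 \<and> (\<forall>i\<in>K j. y i = c j * x i)"
        and v: "x \<in> ?V" "y \<in> ?V" unfolding proj_rel_def by blast
      have "\<exists>c'. \<forall>j\<in>{1..l}. c' j \<noteq> 0 \<and> (\<forall>i\<in>K j. x i = c' j * y i)"
        using c by (intro exI[of _ "\<lambda>j. inverse (c j)"]) (auto simp: field_simps)
      thus "(y, x) \<in> ?R" using v unfolding proj_rel_def by blast
    qed
    show "trans ?R"
    proof (rule transI)
      fix x y z assume "(x, y) \<in> ?R" "(y, z) \<in> ?R"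
      then obtain c d where c: "\<forall>j\<in>{1..l}. c j \<noteq> 0 \<and> (\<forall>i\<in>K j. y i = c j * x i)"
        and d: "\<forall>j\<in>{1..l}. d j \<noteq> 0 \<and> (\<forall>i\<in>K j. z i = d j * y i)"
        and v: "x \<in> ?V" "z \<in> ?V" unfolding proj_rel_def by blast
      have "\<exists>c'. \<forall>j\<in>{1..l}. c' j \<noteq> 0 \<and> (\<forall>i\<in>K j. z i = c' j * x i)"
        using c d by (intro exI[of _ "\<lambda>j. d j * c j"]) (auto simp: mult.assoc)
      thus "(x, z) \<in> ?R" using v unfolding proj_rel_def by blast
    qed
  qed
  have finV: "finite ?V" by (rule finite_subset[of _ "{1..k} \<rightarrow>\<^sub>E U"]) (auto simp: Vsol_def finite_PiE)
  have cards: "\<forall>X\<in>?V // ?R. card X = (card (UNIV::'a set) - 1) ^ l"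
  proof
    fix X assume "X \<in> ?V // ?R"
    then obtain x where X: "X = ?R `` {x}" and x: "x \<in> ?V" by (rule quotientE)
    have "card X = card ({1..l} \<rightarrow>\<^sub>E U)"
      unfolding X class_eq[OF x] by (rule card_image[OF scale_inj[OF x]])
    also have "\<dots> = (card (UNIV::'a set) - 1) ^ l" by (simp add: card_PiE card_nonzero)
    finally show "card X = (card (UNIV::'a set) - 1) ^ l" .
  qed
  have "(card (UNIV::'a set) - 1) ^ l * card (?V // ?R) = card (\<Union>(?V // ?R))"
    by (rule card_partition)
       (use finV eqv cards quotient_disj[OF eqv] in \<open>auto intro: finite_quotient simp: Union_quotient\<close>)
  thus ?thesis unfolding Vproj_def Union_quotient[OF eqv] by (simp add: mult.commute)
qed

end

lemma cancel_helper: "(N::complex) \<noteq> 0 \<Longrightarrow> X * N = N * Y \<Longrightarrow> X = Y"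
  by (simp add: mult.commute)

theorem mainTheorem17:
  fixes \<psi> \<omega> :: "'a::{field,finite} \<Rightarrow> complex"
    and r s l :: nat and p qq :: "nat \<Rightarrow> nat" and K :: "nat \<Rightarrow> nat set" and lam :: 'a
  assumes "add_char \<psi>" and "\<exists>x. \<psi> x \<noteq> 1"
    and "char_generator \<omega>"
    and "\<forall>i\<in>{1..r}. p i > 0" and "\<forall>j\<in>{1..s}. qq j > 0"
    and "(\<Sum>i=1..r. p i) = (\<Sum>j=1..s. qq j)"
    and "\<forall>j\<in>{1..l}. K j \<noteq> {}"
    and "\<forall>j\<in>{1..l}. \<forall>j'\<in>{1..l}. j \<noteq> j' \<longrightarrow> K j \<inter> K j' = {}"
    and "(\<Union>j\<in>{1..l}. K j) = {1..r+s}"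
    and "\<forall>j\<in>{1..l}. (\<Sum>i\<in>K j. (\<lambda>i. if i \<le> r then int (p i) else - int (qq (i - r))) i) = 0"
    and "\<forall>j\<in>{1..l}. Gcd ((\<lambda>i. if i \<le> r then int (p i) else - int (qq (i - r))) ` K j) = 1"
    and "lam \<noteq> 0"
  shows "(let k = r + s; a = (\<lambda>i. if i \<le> r then int (p i) else - int (qq (i - r)));
              \<epsilon> = (-1::'a) ^ (\<Sum>j=1..s. qq j); q = (of_nat (card (UNIV::'a set)) :: complex) in
          of_nat (card (Vproj k a l K lam \<epsilon>)) =
            1 / (q - 1) * (\<Prod>j=1..l. Qpoly (card (K j)) q)
            + 1 / (q ^ l * (q - 1)) *
              (\<Sum>m=1..card (UNIV::'a set) - 2. (\<Prod>i=1..k. gauss \<psi> \<omega> (a i * int m)) * \<omega> (\<epsilon> * lam) ^ m))"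
proof -
  define a where "a = (\<lambda>i. if i \<le> r then int (p i) else - int (qq (i - r)))"
  define \<epsilon> where "\<epsilon> = (-1::'a) ^ (\<Sum>j=1..s. qq j)"
  have e2: "\<epsilon> * \<epsilon> = 1" unfolding \<epsilon>_def by (simp flip: power_add)
  interpret c: cnt \<psi> \<omega> "r+s" l a K lam \<epsilon>
    by unfold_locales (use assms e2 in \<open>simp_all add: a_def\<close>)
  have n0: "(of_nat (card (UNIV::'a set) - 1) :: complex) ^ l \<noteq> 0" using c.n_pos by simp
  have "of_nat (card (Vproj (r+s) a l K lam \<epsilon>)) * (of_nat (card (UNIV::'a set) - 1) :: complex) ^ l
      = of_nat (card (Vsol (r+s) a l K lam \<epsilon>))"
    using c.card_Vproj by (metis of_nat_mult of_nat_power)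
  also have "\<dots> = (of_nat (card (UNIV::'a set) - 1) :: complex) ^ l * 
     (1 / (of_nat (card (UNIV::'a set)) - 1) * (\<Prod>j=1..l. Qpoly (card (K j)) (of_nat (card (UNIV::'a set))))
      + 1 / ((of_nat (card (UNIV::'a set))) ^ l * (of_nat (card (UNIV::'a set)) - 1)) *
        (\<Sum>m=1..card (UNIV::'a set) - 2. (\<Prod>i=1..r+s. gauss \<psi> \<omega> (a i * int m)) * \<omega> (\<epsilon> * lam) ^ m))"
    by (rule c.card_Vsol_formula)
  finally have key: "of_nat (card (Vproj (r+s) a l K lam \<epsilon>)) =
     1 / (of_nat (card (UNIV::'a set)) - 1) * (\<Prod>j=1..l. Qpoly (card (K j)) (of_nat (card (UNIV::'a set))))
      + 1 / ((of_nat (card (UNIV::'a set))) ^ l * (of_nat (card (UNIV::'a set)) - 1)) *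
        (\<Sum>m=1..card (UNIV::'a set) - 2. (\<Prod>i=1..r+s. gauss \<psi> \<omega> (a i * int m)) * \<omega> (\<epsilon> * lam) ^ m)"
    by (rule cancel_helper[OF n0])
  show ?thesis unfolding Let_def using key unfolding a_def \<epsilon>_def .
qed

end
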